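(* Let $G$ be a modular noetherian right $\ell$-group with strong order unit $s$ and degree homomorphism $\deg$. Let $g \in G^-$. Let $g = g_k g_{k-1}\cdots g_1$ be its right-normal factorization and $g = h_1 \cdots h_{k-1} h_k$ its left-normal factorization. Then $\deg(h_i) = \deg(g_i)$ for all $1 \leq i \leq k$.
   Context: A right $\ell$-group is a group $G$ (identity $e$) with a right-invariant partial order making $G$ a lattice. It is modular if the lattice is modular. It is noetherian if for each $g$ the set $\{h \geq g\}$ satisfies the descending chain condition and the set $\{h \leq g\}$ satisfies the ascending chain condition. $G^- = \{g \leq e\}$ and $[a,b] = \{x : a \leq x \leq b\}$. A strong order unit is an element $s > e$ such that $x \mapsto sx$ is a lattice automorphism and every $g$ satisfies $g \leq s^k$ for some $k \in \mathbb{Z}$. $\deg : G \to \mathbb{Z}$ is the unique group homomorphism sending $g \in G^-$ to the common length of its factorizations into elements covered by $e$. A right-normal factorization of $g \in G^-$ is a sequence $g_1,\dots,g_k \in [s^{-1},e] \setminus \{e\}$ with $g = g_k\cdots g_1$ such that, for each $1 \leq i < k$, there are no $h,h' \in G^-$ with $h \neq e$, $h'h = g_{i+1}$, $hg_i \in [s^{-1},e]$. A left-normal factorization of $g$ is a sequence $h_1,\dots,h_k \in [s^{-1},e]\setminus\{e\}$ with $g = h_1\cdots h_k$ such that, for each $1 \leq i < k$, there are no $h,h' \in G^-$ with $h \neq e$, $hh' = h_{i+1}$, $h_i h \in [s^{-1},e]$. Each $g \in G^-$ has a unique right-normal and a unique left-normal factorization, and both have the same number of factors. *)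

theory Defs
  imports "HOL-Algebra.Group"
begin

definition is_sup :: "('a \<Rightarrow> 'a \<Rightarrow> bool) \<Rightarrow> 'a set \<Rightarrow> 'a \<Rightarrow> 'a \<Rightarrow> 'a \<Rightarrow> bool" where
  "is_sup leq A x y j \<longleftrightarrow> j \<in> A \<and> leq x j \<and> leq y j \<and> (\<forall>u\<in>A. leq x u \<longrightarrow> leq y u \<longrightarrow> leq j u)"

definition is_inf :: "('a \<Rightarrow> 'a \<Rightarrow> bool) \<Rightarrow> 'a set \<Rightarrow> 'a \<Rightarrow> 'a \<Rightarrow> 'a \<Rightarrow> bool" where
  "is_inf leq A x y m \<longleftrightarrow> m \<in> A \<and> leq m x \<and> leq m y \<and> (\<forall>u\<in>A. leq u x \<longrightarrow> leq u y \<longrightarrow> leq u m)"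

definition right_l_group :: "('a, 'b) monoid_scheme \<Rightarrow> ('a \<Rightarrow> 'a \<Rightarrow> bool) \<Rightarrow> bool" where
  "right_l_group G leq \<longleftrightarrow> group G
     \<and> (\<forall>x\<in>carrier G. leq x x)
     \<and> (\<forall>x\<in>carrier G. \<forall>y\<in>carrier G. leq x y \<longrightarrow> leq y x \<longrightarrow> x = y)
     \<and> (\<forall>x\<in>carrier G. \<forall>y\<in>carrier G. \<forall>z\<in>carrier G. leq x y \<longrightarrow> leq y z \<longrightarrow> leq x z)
     \<and> (\<forall>x\<in>carrier G. \<forall>y\<in>carrier G. \<forall>z\<in>carrier G. leq x y \<longrightarrow> leq (x \<otimes>\<^bsub>G\<^esub> z) (y \<otimes>\<^bsub>G\<^esub> z))
     \<and> (\<forall>x\<in>carrier G. \<forall>y\<in>carrier G. (\<exists>j. is_sup leq (carrier G) x y j) \<and> (\<exists>m. is_inf leq (carrier G) x y m))"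

definition modular_lattice :: "'a set \<Rightarrow> ('a \<Rightarrow> 'a \<Rightarrow> bool) \<Rightarrow> bool" where
  "modular_lattice A leq \<longleftrightarrow> (\<forall>x\<in>A. \<forall>y\<in>A. \<forall>z\<in>A. leq x z \<longrightarrow>
     (\<forall>m j j' m'. is_inf leq A y z m \<longrightarrow> is_sup leq A x m j \<longrightarrow>
        is_sup leq A x y j' \<longrightarrow> is_inf leq A j' z m' \<longrightarrow> j = m'))"

definition strict :: "('a \<Rightarrow> 'a \<Rightarrow> bool) \<Rightarrow> 'a \<Rightarrow> 'a \<Rightarrow> bool" where
  "strict leq x y \<longleftrightarrow> leq x y \<and> x \<noteq> y"

definition noetherian :: "'a set \<Rightarrow> ('a \<Rightarrow> 'a \<Rightarrow> bool) \<Rightarrow> bool" where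
  "noetherian A leq \<longleftrightarrow> (\<forall>g\<in>A.
     (\<nexists>f::nat \<Rightarrow> 'a. (\<forall>n. f n \<in> A \<and> leq g (f n) \<and> strict leq (f (Suc n)) (f n)))
   \<and> (\<nexists>f::nat \<Rightarrow> 'a. (\<forall>n. f n \<in> A \<and> leq (f n) g \<and> strict leq (f n) (f (Suc n)))))"

definition strong_order_unit :: "('a, 'b) monoid_scheme \<Rightarrow> ('a \<Rightarrow> 'a \<Rightarrow> bool) \<Rightarrow> 'a \<Rightarrow> bool" where
  "strong_order_unit G leq s \<longleftrightarrow> s \<in> carrier G \<and> strict leq \<one>\<^bsub>G\<^esub> s
     \<and> bij_betw (\<lambda>x. s \<otimes>\<^bsub>G\<^esub> x) (carrier G) (carrier G)
     \<and> (\<forall>x\<in>carrier G. \<forall>y\<in>carrier G. \<forall>j. is_sup leq (carrier G) x y j \<longrightarrow>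
          is_sup leq (carrier G) (s \<otimes>\<^bsub>G\<^esub> x) (s \<otimes>\<^bsub>G\<^esub> y) (s \<otimes>\<^bsub>G\<^esub> j))
     \<and> (\<forall>x\<in>carrier G. \<forall>y\<in>carrier G. \<forall>m. is_inf leq (carrier G) x y m \<longrightarrow>
          is_inf leq (carrier G) (s \<otimes>\<^bsub>G\<^esub> x) (s \<otimes>\<^bsub>G\<^esub> y) (s \<otimes>\<^bsub>G\<^esub> m))
     \<and> (\<forall>g\<in>carrier G. \<exists>k::int. leq g (s [^]\<^bsub>G\<^esub> k))"

definition neg_cone :: "('a, 'b) monoid_scheme \<Rightarrow> ('a \<Rightarrow> 'a \<Rightarrow> bool) \<Rightarrow> 'a set" where
  "neg_cone G leq = {g \<in> carrier G. leq g \<one>\<^bsub>G\<^esub>}"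

definition ointerval :: "('a, 'b) monoid_scheme \<Rightarrow> ('a \<Rightarrow> 'a \<Rightarrow> bool) \<Rightarrow> 'a \<Rightarrow> 'a \<Rightarrow> 'a set" where
  "ointerval G leq a b = {x \<in> carrier G. leq a x \<and> leq x b}"

definition covered_by_one :: "('a, 'b) monoid_scheme \<Rightarrow> ('a \<Rightarrow> 'a \<Rightarrow> bool) \<Rightarrow> 'a \<Rightarrow> bool" where
  "covered_by_one G leq a \<longleftrightarrow> a \<in> carrier G \<and> strict leq a \<one>\<^bsub>G\<^esub>
     \<and> (\<nexists>x. x \<in> carrier G \<and> strict leq a x \<and> strict leq x \<one>\<^bsub>G\<^esub>)"

definition lprod :: "('a, 'b) monoid_scheme \<Rightarrow> 'a list \<Rightarrow> 'a" where
  "lprod G xs = foldr (\<lambda>x y. x \<otimes>\<^bsub>G\<^esub> y) xs \<one>\<^bsub>G\<^esub>"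

definition degree_hom :: "('a, 'b) monoid_scheme \<Rightarrow> ('a \<Rightarrow> 'a \<Rightarrow> bool) \<Rightarrow> ('a \<Rightarrow> int) \<Rightarrow> bool" where
  "degree_hom G leq deg \<longleftrightarrow>
     (\<forall>x\<in>carrier G. \<forall>y\<in>carrier G. deg (x \<otimes>\<^bsub>G\<^esub> y) = deg x + deg y)
   \<and> (\<forall>g\<in>neg_cone G leq. \<forall>xs. (\<forall>a\<in>set xs. covered_by_one G leq a) \<longrightarrow> lprod G xs = g
        \<longrightarrow> deg g = int (length xs))"

text \<open>Right-normal factorization: gs = [g1,...,gk] with g = gk ... g1.\<close>
definition right_normal_fact :: "('a, 'b) monoid_scheme \<Rightarrow> ('a \<Rightarrow> 'a \<Rightarrow> bool) \<Rightarrow> 'a \<Rightarrow> 'a \<Rightarrow> 'a list \<Rightarrow> bool" where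
  "right_normal_fact G leq s g gs \<longleftrightarrow>
     (\<forall>x\<in>set gs. x \<in> ointerval G leq (inv\<^bsub>G\<^esub> s) \<one>\<^bsub>G\<^esub> - {\<one>\<^bsub>G\<^esub>})
   \<and> g = lprod G (rev gs)
   \<and> (\<forall>i. Suc i < length gs \<longrightarrow> \<not> (\<exists>h\<in>neg_cone G leq. \<exists>h'\<in>neg_cone G leq.
        h \<noteq> \<one>\<^bsub>G\<^esub> \<and> h' \<otimes>\<^bsub>G\<^esub> h = gs ! (Suc i)
        \<and> h \<otimes>\<^bsub>G\<^esub> (gs ! i) \<in> ointerval G leq (inv\<^bsub>G\<^esub> s) \<one>\<^bsub>G\<^esub>))"

definition left_normal_fact :: "('a, 'b) monoid_scheme \<Rightarrow> ('a \<Rightarrow> 'a \<Rightarrow> bool) \<Rightarrow> 'a \<Rightarrow> 'a \<Rightarrow> 'a list \<Rightarrow> bool" where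
  "left_normal_fact G leq s g hs \<longleftrightarrow>
     (\<forall>x\<in>set hs. x \<in> ointerval G leq (inv\<^bsub>G\<^esub> s) \<one>\<^bsub>G\<^esub> - {\<one>\<^bsub>G\<^esub>})
   \<and> g = lprod G hs
   \<and> (\<forall>i. Suc i < length hs \<longrightarrow> \<not> (\<exists>h\<in>neg_cone G leq. \<exists>h'\<in>neg_cone G leq.
        h \<noteq> \<one>\<^bsub>G\<^esub> \<and> h \<otimes>\<^bsub>G\<^esub> h' = hs ! (Suc i)
        \<and> (hs ! i) \<otimes>\<^bsub>G\<^esub> h \<in> ointerval G leq (inv\<^bsub>G\<^esub> s) \<one>\<^bsub>G\<^esub>))"

end

theory Submission
  imports Defs
begin


locale ctx = group G for G :: "('a,'b) monoid_scheme" (structure) +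
  fixes lq :: "'a \<Rightarrow> 'a \<Rightarrow> bool" and s :: 'a and deg :: "'a \<Rightarrow> int"
  assumes rlg: "right_l_group G lq" and modl: "modular_lattice (carrier G) lq"
    and noeth: "noetherian (carrier G) lq" and sou: "strong_order_unit G lq s"
    and dh: "degree_hom G lq deg"
begin

lemma refl: "x \<in> carrier G \<Longrightarrow> lq x x" using rlg unfolding right_l_group_def by blast
lemma antisym: "x \<in> carrier G \<Longrightarrow> y \<in> carrier G \<Longrightarrow> lq x y \<Longrightarrow> lq y x \<Longrightarrow> x = y"
  using rlg unfolding right_l_group_def by blast
lemma trans: "x \<in> carrier G \<Longrightarrow> y \<in> carrier G \<Longrightarrow> z \<in> carrier G \<Longrightarrow> lq x y \<Longrightarrow> lq y z \<Longrightarrow> lq x z"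
  using rlg unfolding right_l_group_def by blast
lemma rmono: "x \<in> carrier G \<Longrightarrow> y \<in> carrier G \<Longrightarrow> z \<in> carrier G \<Longrightarrow> lq x y \<Longrightarrow> lq (x \<otimes> z) (y \<otimes> z)"
  using rlg unfolding right_l_group_def by blast
lemma sup_ex: "x \<in> carrier G \<Longrightarrow> y \<in> carrier G \<Longrightarrow> \<exists>j. is_sup lq (carrier G) x y j"
  using rlg unfolding right_l_group_def by blast
lemma inf_ex: "x \<in> carrier G \<Longrightarrow> y \<in> carrier G \<Longrightarrow> \<exists>j. is_inf lq (carrier G) x y j"
  using rlg unfolding right_l_group_def by blast

lemma rmono_iff: assumes c: "x \<in> carrier G" "y \<in> carrier G" "z \<in> carrier G"
  shows "lq (x \<otimes> z) (y \<otimes> z) \<longleftrightarrow> lq x y"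
proof
  assume "lq (x \<otimes> z) (y \<otimes> z)"
  then have "lq (x \<otimes> z \<otimes> inv z) (y \<otimes> z \<otimes> inv z)" using c by (rule_tac rmono) auto
  moreover have "x \<otimes> z \<otimes> inv z = x" "y \<otimes> z \<otimes> inv z = y" using c by (simp_all add: m_assoc)
  ultimately show "lq x y" by simp
qed (use c in \<open>rule rmono\<close>)

definition jn where "jn x y = (SOME j. is_sup lq (carrier G) x y j)"
definition mt where "mt x y = (SOME j. is_inf lq (carrier G) x y j)"

lemma jn_is: "x \<in> carrier G \<Longrightarrow> y \<in> carrier G \<Longrightarrow> is_sup lq (carrier G) x y (jn x y)"
  unfolding jn_def using sup_ex by (rule someI_ex)
lemma mt_is: "x \<in> carrier G \<Longrightarrow> y \<in> carrier G \<Longrightarrow> is_inf lq (carrier G) x y (mt x y)"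
  unfolding mt_def using inf_ex by (rule someI_ex)

lemma jn_closed[simp]: "x \<in> carrier G \<Longrightarrow> y \<in> carrier G \<Longrightarrow> jn x y \<in> carrier G"
  using jn_is unfolding is_sup_def by blast
lemma mt_closed[simp]: "x \<in> carrier G \<Longrightarrow> y \<in> carrier G \<Longrightarrow> mt x y \<in> carrier G"
  using mt_is unfolding is_inf_def by blast
lemma jn_ub1: "x \<in> carrier G \<Longrightarrow> y \<in> carrier G \<Longrightarrow> lq x (jn x y)"
  using jn_is unfolding is_sup_def by blast
lemma jn_ub2: "x \<in> carrier G \<Longrightarrow> y \<in> carrier G \<Longrightarrow> lq y (jn x y)"
  using jn_is unfolding is_sup_def by blast
lemma jn_least: "x \<in> carrier G \<Longrightarrow> y \<in> carrier G \<Longrightarrow> u \<in> carrier G \<Longrightarrow> lq x u \<Longrightarrow> lq y u \<Longrightarrow> lq (jn x y) u"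
  using jn_is unfolding is_sup_def by blast
lemma mt_lb1: "x \<in> carrier G \<Longrightarrow> y \<in> carrier G \<Longrightarrow> lq (mt x y) x"
  using mt_is unfolding is_inf_def by blast
lemma mt_lb2: "x \<in> carrier G \<Longrightarrow> y \<in> carrier G \<Longrightarrow> lq (mt x y) y"
  using mt_is unfolding is_inf_def by blast
lemma mt_greatest: "x \<in> carrier G \<Longrightarrow> y \<in> carrier G \<Longrightarrow> u \<in> carrier G \<Longrightarrow> lq u x \<Longrightarrow> lq u y \<Longrightarrow> lq u (mt x y)"
  using mt_is unfolding is_inf_def by blast

lemma sup_unique: "x \<in> carrier G \<Longrightarrow> y \<in> carrier G \<Longrightarrow> is_sup lq (carrier G) x y j \<Longrightarrow> jn x y = j"
  by (rule antisym) (auto simp: is_sup_def intro: jn_least jn_ub1 jn_ub2)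
lemma inf_unique: "x \<in> carrier G \<Longrightarrow> y \<in> carrier G \<Longrightarrow> is_inf lq (carrier G) x y j \<Longrightarrow> mt x y = j"
  by (rule antisym) (auto simp: is_inf_def intro: mt_greatest mt_lb1 mt_lb2)

lemma jn_eqI: "x \<in> carrier G \<Longrightarrow> y \<in> carrier G \<Longrightarrow> j \<in> carrier G \<Longrightarrow> lq x j \<Longrightarrow> lq y j \<Longrightarrow>
   (\<And>u. u \<in> carrier G \<Longrightarrow> lq x u \<Longrightarrow> lq y u \<Longrightarrow> lq j u) \<Longrightarrow> jn x y = j"
  by (rule sup_unique) (auto simp: is_sup_def)
lemma mt_eqI: "x \<in> carrier G \<Longrightarrow> y \<in> carrier G \<Longrightarrow> j \<in> carrier G \<Longrightarrow> lq j x \<Longrightarrow> lq j y \<Longrightarrow>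
   (\<And>u. u \<in> carrier G \<Longrightarrow> lq u x \<Longrightarrow> lq u y \<Longrightarrow> lq u j) \<Longrightarrow> mt x y = j"
  by (rule inf_unique) (auto simp: is_inf_def)

lemma jn_comm: "x \<in> carrier G \<Longrightarrow> y \<in> carrier G \<Longrightarrow> jn x y = jn y x"
  by (rule jn_eqI) (auto intro: jn_ub1 jn_ub2 jn_least)
lemma mt_comm: "x \<in> carrier G \<Longrightarrow> y \<in> carrier G \<Longrightarrow> mt x y = mt y x"
  by (rule mt_eqI) (auto intro: mt_lb1 mt_lb2 mt_greatest)
lemma jn_le: "x \<in> carrier G \<Longrightarrow> y \<in> carrier G \<Longrightarrow> lq x y \<Longrightarrow> jn x y = y"
  by (rule jn_eqI) (auto intro: refl)
lemma mt_le: "x \<in> carrier G \<Longrightarrow> y \<in> carrier G \<Longrightarrow> lq x y \<Longrightarrow> mt x y = x"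
  by (rule mt_eqI) (auto intro: refl)

lemma jn_rmult: assumes c: "x \<in> carrier G" "y \<in> carrier G" "z \<in> carrier G"
  shows "jn (x \<otimes> z) (y \<otimes> z) = jn x y \<otimes> z"
proof (rule jn_eqI)
  fix u assume u: "u \<in> carrier G" "lq (x \<otimes> z) u" "lq (y \<otimes> z) u"
  have e: "u = (u \<otimes> inv z) \<otimes> z" using u c by (simp add: m_assoc)
  have "lq x (u \<otimes> inv z)" "lq y (u \<otimes> inv z)"
    using u c e rmono_iff[of x "u \<otimes> inv z" z] rmono_iff[of y "u \<otimes> inv z" z] by auto
  then have "lq (jn x y) (u \<otimes> inv z)" using c u by (intro jn_least) auto
  then show "lq (jn x y \<otimes> z) u" using c u e by (metis inv_closed jn_closed m_closed rmono)
qed (use c in \<open>auto intro: rmono jn_ub1 jn_ub2\<close>)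

lemma mt_rmult: assumes c: "x \<in> carrier G" "y \<in> carrier G" "z \<in> carrier G"
  shows "mt (x \<otimes> z) (y \<otimes> z) = mt x y \<otimes> z"
proof (rule mt_eqI)
  fix u assume u: "u \<in> carrier G" "lq u (x \<otimes> z)" "lq u (y \<otimes> z)"
  have e: "u = (u \<otimes> inv z) \<otimes> z" using u c by (simp add: m_assoc)
  have "lq (u \<otimes> inv z) x" "lq (u \<otimes> inv z) y"
    using u c e rmono_iff[of "u \<otimes> inv z" x z] rmono_iff[of "u \<otimes> inv z" y z] by auto
  then have "lq (u \<otimes> inv z) (mt x y)" using c u by (intro mt_greatest) auto
  then show "lq u (mt x y \<otimes> z)" using c u e by (metis inv_closed mt_closed m_closed rmono)
qed (use c in \<open>auto intro: rmono mt_lb1 mt_lb2\<close>)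

lemma jn_absorb: assumes c: "a \<in> carrier G" "b \<in> carrier G" "c \<in> carrier G" and ba: "lq b a"
  shows "jn a (jn b c) = jn a c"
proof (rule jn_eqI)
  have 1: "lq a (jn a c)" "lq c (jn a c)" using c by (auto intro: jn_ub1 jn_ub2)
  have "lq b (jn a c)" using trans[of b a "jn a c"] c ba 1 by simp
  then show "lq (jn b c) (jn a c)" using c 1 by (intro jn_least) auto
  fix u assume u: "u \<in> carrier G" "lq a u" "lq (jn b c) u"
  have "lq c u" using trans[of c "jn b c" u] c u jn_ub2[of b c] by simp
  then show "lq (jn a c) u" using u c by (intro jn_least) auto
qed (use c in \<open>auto intro: jn_ub1\<close>)

lemma mt_absorb: assumes c: "a \<in> carrier G" "b \<in> carrier G" "c \<in> carrier G" and ab: "lq a b"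
  shows "mt (mt c b) a = mt c a"
proof (rule mt_eqI)
  have 1: "lq (mt c a) c" "lq (mt c a) a" using c by (auto intro: mt_lb1 mt_lb2)
  have "lq (mt c a) b" using trans[of "mt c a" a b] c ab 1 by simp
  then show "lq (mt c a) (mt c b)" using c 1 by (intro mt_greatest) auto
  fix u assume u: "u \<in> carrier G" "lq u (mt c b)" "lq u a"
  have "lq u c" using trans[of u "mt c b" c] c u mt_lb1[of c b] by simp
  then show "lq u (mt c a)" using u c by (intro mt_greatest) auto
qed (use c in \<open>auto intro: mt_lb2\<close>)


lemma s_carr[simp]: "s \<in> carrier G" using sou unfolding strong_order_unit_def by (elim conjE)
lemma one_le_s: "lq \<one> s" using sou unfolding strong_order_unit_def strict_def by (elim conjE)
lemma s_jn: "x \<in> carrier G \<Longrightarrow> y \<in> carrier G \<Longrightarrow> jn (s \<otimes> x) (s \<otimes> y) = s \<otimes> jn x y"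
  apply (rule sup_unique, simp, simp)
  using sou jn_is unfolding strong_order_unit_def by blast
lemma s_mt: "x \<in> carrier G \<Longrightarrow> y \<in> carrier G \<Longrightarrow> mt (s \<otimes> x) (s \<otimes> y) = s \<otimes> mt x y"
  apply (rule inf_unique, simp, simp)
  using sou mt_is unfolding strong_order_unit_def by blast
lemma s_mono_iff: assumes c: "x \<in> carrier G" "y \<in> carrier G" shows "lq (s \<otimes> x) (s \<otimes> y) \<longleftrightarrow> lq x y"
proof
  assume "lq (s \<otimes> x) (s \<otimes> y)"
  then have "jn (s \<otimes> x) (s \<otimes> y) = s \<otimes> y" using c by (intro jn_le) auto
  then have "s \<otimes> jn x y = s \<otimes> y" using c s_jn by simp
  then have "jn x y = y" using c by simp
  then show "lq x y" using c jn_ub1 by metis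
next
  assume "lq x y"
  then have "jn x y = y" using c by (intro jn_le) auto
  then have "jn (s \<otimes> x) (s \<otimes> y) = s \<otimes> y" using c s_jn by simp
  then show "lq (s \<otimes> x) (s \<otimes> y)" using c jn_ub1 by (metis m_closed s_carr)
qed

lemma D_le: "lq (inv s) \<one>"
  using s_mono_iff[of "inv s" \<one>] one_le_s by simp
lemma pow_ge: "lq \<one> (s [^] (n::nat))"
proof (induction n)
  case 0 then show ?case by (simp add: refl)
next
  case (Suc n)
  have "lq (\<one> \<otimes> s) (s [^] n \<otimes> s)" using Suc by (intro rmono) auto
  then have "lq s (s [^] Suc n)" by simp
  then show ?case using one_le_s trans[of \<one> s "s [^] Suc n"] by simp
qed

lemma deg_mult: "x \<in> carrier G \<Longrightarrow> y \<in> carrier G \<Longrightarrow> deg (x \<otimes> y) = deg x + deg y"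
  using dh unfolding degree_hom_def by blast
lemma deg_one[simp]: "deg \<one> = 0"
  using deg_mult[of \<one> \<one>] by simp
lemma deg_inv: "x \<in> carrier G \<Longrightarrow> deg (inv x) = - deg x"
  using deg_mult[of x "inv x"] by simp
lemma deg_pow: "deg (s [^] (n::nat)) = int n * deg s"
  by (induction n) (auto simp: deg_mult algebra_simps)

lemma deg_cover: assumes c: "a \<in> carrier G" "b \<in> carrier G" and ab: "lq a b" "a \<noteq> b"
  and nb: "\<And>u. u \<in> carrier G \<Longrightarrow> lq a u \<Longrightarrow> lq u b \<Longrightarrow> u = a \<or> u = b"
  shows "deg a = deg b + 1"
proof -
  define c where "c = a \<otimes> inv b"
  have cc: "c \<in> carrier G" using c c_def by simp
  have bb: "b \<otimes> inv b = \<one>" using c by simp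
  have "lq c \<one>" using rmono[OF c(1) c(2) inv_closed[OF c(2)] ab(1)] bb c_def by simp
  moreover have "c \<noteq> \<one>" using c ab c_def inv_solve_right'[of \<one> a b] by simp
  moreover have "\<not> (\<exists>x. x \<in> carrier G \<and> strict lq c x \<and> strict lq x \<one>)"
  proof
    assume "\<exists>x. x \<in> carrier G \<and> strict lq c x \<and> strict lq x \<one>"
    then obtain x where x: "x \<in> carrier G" "lq c x" "c \<noteq> x" "lq x \<one>" "x \<noteq> \<one>" unfolding strict_def by blast
    have "lq (c \<otimes> b) (x \<otimes> b)" using x cc c by (intro rmono) auto
    moreover have cba: "c \<otimes> b = a" using c c_def by (simp add: m_assoc)
    moreover have "lq (x \<otimes> b) (\<one> \<otimes> b)" using x c by (intro rmono) auto
    ultimately have "x \<otimes> b = a \<or> x \<otimes> b = b" using nb[of "x \<otimes> b"] x c by simp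
    then show False using x c cc cba right_cancel[of b x c] r_cancel_one[of b x] by auto
  qed
  ultimately have cov: "covered_by_one G lq c" unfolding covered_by_one_def strict_def using cc by blast
  have "lprod G [c] = c" unfolding lprod_def using cc by simp
  moreover have "c \<in> neg_cone G lq" unfolding neg_cone_def using cc \<open>lq c \<one>\<close> by simp
  moreover have "\<forall>g\<in>neg_cone G lq. \<forall>xs. (\<forall>a\<in>set xs. covered_by_one G lq a) \<longrightarrow> lprod G xs = g
        \<longrightarrow> deg g = int (length xs)" using dh unfolding degree_hom_def by blast
  moreover have "\<forall>a\<in>set [c]. covered_by_one G lq a" using cov by simp
  ultimately have "deg c = int (length [c])" by blast
  then have "deg c = 1" by simp
  then show ?thesis using c c_def deg_mult deg_inv by simp
qed


end

context ctx begin
lemma modular: assumes c: "a \<in> carrier G" "b \<in> carrier G" "c \<in> carrier G" and "lq a c"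
  shows "jn a (mt b c) = mt (jn a b) c"
  using modl assms jn_is mt_is mt_closed jn_closed unfolding modular_lattice_def by metis

lemma wf_up: assumes g: "g \<in> carrier G"
  shows "wf {(a,b). a \<in> carrier G \<and> b \<in> carrier G \<and> lq g a \<and> strict lq a b}"
  unfolding wf_iff_no_infinite_down_chain
proof
  assume "\<exists>f. \<forall>i. (f (Suc i), f i) \<in> {(a,b). a \<in> carrier G \<and> b \<in> carrier G \<and> lq g a \<and> strict lq a b}"
  then obtain f where f: "\<And>i. f (Suc i) \<in> carrier G \<and> f i \<in> carrier G \<and> lq g (f (Suc i)) \<and> strict lq (f (Suc i)) (f i)" by auto
  have "\<forall>n. f n \<in> carrier G \<and> lq g (f n) \<and> strict lq (f (Suc n)) (f n)"
  proof
    fix n show "f n \<in> carrier G \<and> lq g (f n) \<and> strict lq (f (Suc n)) (f n)"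
      using f[of n] f[of "Suc n"] g trans[of g "f (Suc n)" "f n"] unfolding strict_def by blast
  qed
  then show False using noeth g unfolding noetherian_def by blast
qed

lemma wf_down: assumes g: "g \<in> carrier G"
  shows "wf {(a,b). a \<in> carrier G \<and> b \<in> carrier G \<and> lq a g \<and> strict lq b a}"
  unfolding wf_iff_no_infinite_down_chain
proof
  assume "\<exists>f. \<forall>i. (f (Suc i), f i) \<in> {(a,b). a \<in> carrier G \<and> b \<in> carrier G \<and> lq a g \<and> strict lq b a}"
  then obtain f where f: "\<And>i. f (Suc i) \<in> carrier G \<and> f i \<in> carrier G \<and> lq (f (Suc i)) g \<and> strict lq (f i) (f (Suc i))" by auto
  have "\<forall>n. f n \<in> carrier G \<and> lq (f n) g \<and> strict lq (f n) (f (Suc n))"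
  proof
    fix n show "f n \<in> carrier G \<and> lq (f n) g \<and> strict lq (f n) (f (Suc n))"
      using f[of n] g trans[of "f n" "f (Suc n)" g] unfolding strict_def by blast
  qed
  then show False using noeth g unfolding noetherian_def by blast
qed

lemma cover_ex: assumes c: "z \<in> carrier G" "y \<in> carrier G" and "lq z y" "z \<noteq> y"
  shows "\<exists>w. w \<in> carrier G \<and> lq z w \<and> z \<noteq> w \<and> lq w y \<and>
     (\<forall>u. u \<in> carrier G \<longrightarrow> lq z u \<longrightarrow> lq u w \<longrightarrow> u = z \<or> u = w)"
proof -
  let ?A = "{w. w \<in> carrier G \<and> lq z w \<and> z \<noteq> w \<and> lq w y}"
  let ?R = "{(a,b). a \<in> carrier G \<and> b \<in> carrier G \<and> lq z a \<and> strict lq a b}"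
  have yA: "y \<in> ?A" using assms by (simp add: refl)
  obtain w where w: "w \<in> ?A" and mn: "\<And>a. (a, w) \<in> ?R \<Longrightarrow> a \<notin> ?A"
    by (rule wfE_min[OF wf_up[OF c(1)] yA]) blast
  show ?thesis
  proof (intro exI conjI allI impI)
    fix u assume u: "u \<in> carrier G" "lq z u" "lq u w"
    show "u = z \<or> u = w"
    proof (rule ccontr)
      assume "\<not> (u = z \<or> u = w)"
      then have "(u, w) \<in> ?R" "u \<in> ?A" using u w c trans[of u w y] unfolding strict_def by auto
      then show False using mn by blast
    qed
  qed (use w in auto)
qed

lemma cover_jn: assumes c: "x \<in> carrier G" "y \<in> carrier G" "z \<in> carrier G" "w \<in> carrier G"
  and h: "lq (mt x y) z" "lq z w" "z \<noteq> w" "lq w y"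
  and cv: "\<And>u. u \<in> carrier G \<Longrightarrow> lq z u \<Longrightarrow> lq u w \<Longrightarrow> u = z \<or> u = w"
  shows "lq (jn z x) (jn w x)" "jn z x \<noteq> jn w x"
    "\<And>u. u \<in> carrier G \<Longrightarrow> lq (jn z x) u \<Longrightarrow> lq u (jn w x) \<Longrightarrow> u = jn z x \<or> u = jn w x"
proof -
  have jzw: "lq (jn z x) (jn w x)" using c h
    by (meson jn_closed jn_least jn_ub1 jn_ub2 trans)
  then show "lq (jn z x) (jn w x)" .
  have mxw: "lq (mt x w) z"
  proof -
    have "lq (mt x w) (mt x y)" using c h by (meson mt_closed mt_greatest mt_lb1 mt_lb2 trans)
    then show ?thesis using c h by (meson mt_closed trans)
  qed
  have z_eq: "z = mt (jn z x) w"
    using modular[of z x w] c h mxw jn_le[of "mt x w" z] jn_comm[of z "mt x w"] by simp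
  have w_eq: "w = mt (jn w x) w" using c by (metis jn_closed jn_ub1 mt_comm mt_le)
  show "jn z x \<noteq> jn w x" using z_eq w_eq h by metis
  fix u assume u: "u \<in> carrier G" "lq (jn z x) u" "lq u (jn w x)"
  show "u = jn z x \<or> u = jn w x"
  proof (rule ccontr)
    assume nu: "\<not> (u = jn z x \<or> u = jn w x)"
    have zu: "lq z u" using c u by (meson jn_closed jn_ub1 trans)
    have xu: "lq x u" using c u by (meson jn_closed jn_ub2 trans)
    have "lq z (mt u w)" using c zu h u by (intro mt_greatest) auto
    moreover have "lq (mt u w) w" using c u by (intro mt_lb2) auto
    ultimately have "mt u w = z \<or> mt u w = w" using cv c u by auto
    then show False
    proof
      assume "mt u w = w"
      then have "lq w u" using c u by (metis mt_lb1)
      then have "lq (jn w x) u" using c u xu by (intro jn_least) auto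
      then show False using nu u c antisym by (metis jn_closed)
    next
      assume e: "mt u w = z"
      have "jn x (mt w u) = mt (jn x w) u" using c u xu by (intro modular) auto
      moreover have "mt (jn x w) u = u" using c u jn_comm[of x w] mt_comm mt_le by (metis jn_closed)
      moreover have "jn x (mt w u) = jn z x" using e c u mt_comm jn_comm by metis
      ultimately show False using nu by simp
    qed
  qed
qed

lemma rank: assumes c: "x \<in> carrier G" "y \<in> carrier G"
  shows "deg (jn x y) + deg (mt x y) = deg x + deg y"
proof -
  let ?R = "{(a,b). a \<in> carrier G \<and> b \<in> carrier G \<and> lq a y \<and> strict lq b a}"
  let ?m = "mt x y"
  have main: "\<forall>z. z \<in> carrier G \<longrightarrow> lq ?m z \<longrightarrow> lq z y \<longrightarrow> deg z + deg (jn x y) = deg (jn z x) + deg y"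
  proof -
    have "z \<in> carrier G \<longrightarrow> lq ?m z \<longrightarrow> lq z y \<longrightarrow> deg z + deg (jn x y) = deg (jn z x) + deg y" for z
    proof (induction z rule: wf_induct[OF wf_down[OF c(2)]])
      case (1 z)
      show ?case
      proof (intro impI)
        assume z: "z \<in> carrier G" "lq ?m z" "lq z y"
        show "deg z + deg (jn x y) = deg (jn z x) + deg y"
        proof (cases "z = y")
          case True then show ?thesis using c jn_comm by simp
        next
          case False
          then obtain w where w: "w \<in> carrier G" "lq z w" "z \<noteq> w" "lq w y"
            "\<And>u. u \<in> carrier G \<Longrightarrow> lq z u \<Longrightarrow> lq u w \<Longrightarrow> u = z \<or> u = w"
            using cover_ex[OF z(1) c(2) z(3)] by blast
          have "(w, z) \<in> ?R" using w z unfolding strict_def by auto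
          moreover have "lq ?m w" using z w c by (meson mt_closed trans)
          ultimately have IH: "deg w + deg (jn x y) = deg (jn w x) + deg y" using 1 w by blast
          have d1: "deg z = deg w + 1" using deg_cover[OF z(1) w(1) w(2) w(3)] w(5) by blast
          have "deg (jn z x) = deg (jn w x) + 1"
            apply (rule deg_cover)
            using cover_jn[OF c z(1) w(1) z(2) w(2) w(3) w(4) w(5)] c z w by auto
          then show ?thesis using IH d1 by simp
        qed
      qed
    qed
    then show ?thesis by blast
  qed
  have "lq ?m y" "lq ?m x" using c by (auto intro: mt_lb1 mt_lb2)
  then have "deg ?m + deg (jn x y) = deg (jn ?m x) + deg y" using main c by (simp add: refl)
  moreover have "jn ?m x = x" using c \<open>lq ?m x\<close> by (intro jn_le) auto
  ultimately show ?thesis by simp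
qed


end

context ctx begin
definition simple where "simple x \<longleftrightarrow> x \<in> carrier G \<and> lq (inv s) x \<and> lq x \<one>"
definition rc where "rc a b \<longleftrightarrow> \<not> (\<exists>h\<in>neg_cone G lq. \<exists>h'\<in>neg_cone G lq.
        h \<noteq> \<one> \<and> h' \<otimes> h = b \<and> h \<otimes> a \<in> ointerval G lq (inv s) \<one>)"
definition lc where "lc a b \<longleftrightarrow> \<not> (\<exists>h\<in>neg_cone G lq. \<exists>h'\<in>neg_cone G lq.
        h \<noteq> \<one> \<and> h \<otimes> h' = b \<and> a \<otimes> h \<in> ointerval G lq (inv s) \<one>)"
definition RN where "RN gs \<longleftrightarrow> (\<forall>x\<in>set gs. simple x) \<and> (\<forall>i. Suc i < length gs \<longrightarrow> rc (gs!i) (gs!Suc i))"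
definition LN where "LN gs \<longleftrightarrow> (\<forall>x\<in>set gs. simple x) \<and> (\<forall>i. Suc i < length gs \<longrightarrow> lc (gs!i) (gs!Suc i))"

lemma lprod_Nil[simp]: "lprod G [] = \<one>" by (simp add: lprod_def)
lemma lprod_Cons[simp]: "lprod G (x # xs) = x \<otimes> lprod G xs" by (simp add: lprod_def)
lemma lprod_closed: "set xs \<subseteq> carrier G \<Longrightarrow> lprod G xs \<in> carrier G"
  by (induction xs) auto
lemma lprod_append: "set xs \<subseteq> carrier G \<Longrightarrow> set ys \<subseteq> carrier G \<Longrightarrow> lprod G (xs @ ys) = lprod G xs \<otimes> lprod G ys"
  by (induction xs) (auto simp: m_assoc lprod_closed)
lemma simple_carr: "\<forall>x\<in>set xs. simple x \<Longrightarrow> set xs \<subseteq> carrier G"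
  unfolding simple_def by auto
lemma lprod_neg: "\<forall>x\<in>set xs. simple x \<Longrightarrow> lq (lprod G xs) \<one>"
proof (induction xs)
  case Nil then show ?case by (simp add: refl)
next
  case (Cons x xs)
  have sx: "\<forall>y\<in>set xs. simple y" using Cons.prems by simp
  have c: "x \<in> carrier G" "lprod G xs \<in> carrier G" using Cons.prems lprod_closed[OF simple_carr[OF sx]] unfolding simple_def by auto
  have "lq (x \<otimes> lprod G xs) (\<one> \<otimes> lprod G xs)" using c Cons.prems unfolding simple_def by (intro rmono) auto
  then show ?case using Cons c by (simp, meson m_closed one_closed trans)
qed

lemma RN_tl: "RN (g # gs) \<Longrightarrow> RN gs"
proof -
  assume a: "RN (g # gs)"
  have "\<forall>i. Suc i < length gs \<longrightarrow> rc (gs!i) (gs!Suc i)"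
  proof (intro allI impI)
    fix i assume "Suc i < length gs"
    then have "Suc (Suc i) < length (g # gs)" by simp
    then have "rc ((g#gs)!Suc i) ((g#gs)!Suc (Suc i))" using a unfolding RN_def by blast
    then show "rc (gs!i) (gs!Suc i)" by simp
  qed
  then show ?thesis using a unfolding RN_def by simp
qed
lemma LN_drop: "LN gs \<Longrightarrow> LN (drop i gs)"
proof -
  assume a: "LN gs"
  have "\<forall>j. Suc j < length (drop i gs) \<longrightarrow> lc (drop i gs!j) (drop i gs!Suc j)"
  proof (intro allI impI)
    fix j assume j: "Suc j < length (drop i gs)"
    then have "Suc (i + j) < length gs" by simp
    then have "lc (gs!(i+j)) (gs!Suc (i+j))" using a unfolding LN_def by blast
    then show "lc (drop i gs!j) (drop i gs!Suc j)" using j by simp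
  qed
  then show ?thesis using a unfolding LN_def by (auto dest: in_set_dropD)
qed

lemma rloc: assumes g1: "simple g1" and g2: "simple g2" and r: "rc g1 g2"
  shows "jn (g2 \<otimes> g1) (inv s) = g1"
proof -
  have c: "g1 \<in> carrier G" "g2 \<in> carrier G" using g1 g2 unfolding simple_def by auto
  define d where "d = jn (g2 \<otimes> g1) (inv s)"
  have dc: "d \<in> carrier G" using c d_def by simp
  have "lq (g2 \<otimes> g1) (\<one> \<otimes> g1)" using c g2 unfolding simple_def by (intro rmono) auto
  then have dg1: "lq d g1" unfolding d_def using c g1 unfolding simple_def by (intro jn_least) auto
  define h where "h = d \<otimes> inv g1"
  have hc: "h \<in> carrier G" using h_def dc c by simp
  have "lq (d \<otimes> inv g1) (g1 \<otimes> inv g1)" using dg1 dc c by (intro rmono) auto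
  then have hn: "h \<in> neg_cone G lq" unfolding neg_cone_def h_def using hc h_def c by simp
  have "lq (g2 \<otimes> g1) d" unfolding d_def using c by (intro jn_ub1) auto
  then have "lq (g2 \<otimes> g1 \<otimes> inv g1) h" unfolding h_def using dc c by (intro rmono) auto
  then have g2h: "lq g2 h" using c by (simp add: m_assoc)
  define h' where "h' = g2 \<otimes> inv h"
  have "lq (g2 \<otimes> inv h) (h \<otimes> inv h)" using g2h c hc by (intro rmono) auto
  then have h'n: "h' \<in> neg_cone G lq" unfolding neg_cone_def h'_def using hc c by simp
  have "h' \<otimes> h = g2" unfolding h'_def using hc c by (simp add: m_assoc)
  moreover have "h \<otimes> g1 = d" unfolding h_def using dc c by (simp add: m_assoc)
  moreover have "d \<in> ointerval G lq (inv s) \<one>" unfolding ointerval_def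
  proof (intro CollectI conjI)
    show "lq (inv s) d" unfolding d_def using c by (intro jn_ub2) auto
    show "lq d \<one>" using dc c dg1 g1 trans[of d g1 \<one>] unfolding simple_def by simp
  qed (rule dc)
  ultimately have "h = \<one>" using r hn h'n unfolding rc_def by blast
  then show ?thesis using \<open>h \<otimes> g1 = d\<close> c d_def by simp
qed

lemma rjoinA: assumes c: "a \<in> carrier G" "b \<in> carrier G" and b1: "lq b \<one>"
  shows "jn (a \<otimes> b) (inv s) = jn (jn a (inv s) \<otimes> b) (inv s)"
proof -
  define d where "d = jn (a \<otimes> b) (inv s)"
  define d' where "d' = jn (jn a (inv s) \<otimes> b) (inv s)"
  have dc: "d \<in> carrier G" "d' \<in> carrier G" using c d_def d'_def by auto
  have ja: "jn a (inv s) \<in> carrier G" using c by simp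
  have "lq a (jn a (inv s))" using c by (intro jn_ub1) auto
  then have "lq (a \<otimes> b) (jn a (inv s) \<otimes> b)" using c ja by (rule_tac rmono) auto
  moreover have "lq (jn a (inv s) \<otimes> b) d'" unfolding d'_def using c ja by (intro jn_ub1) auto
  ultimately have "lq (a \<otimes> b) d'" using trans[of "a \<otimes> b" "jn a (inv s) \<otimes> b" d'] c ja dc by simp
  moreover have "lq (inv s) d'" unfolding d'_def using c ja by (intro jn_ub2) auto
  ultimately have 1: "lq d d'" unfolding d_def using c dc by (intro jn_least) auto
  have e: "jn a (inv s) \<otimes> b = jn (a \<otimes> b) (inv s \<otimes> b)" using c jn_rmult by simp
  have sd: "lq (inv s) d" unfolding d_def using c by (intro jn_ub2) auto
  have "lq (s \<otimes> inv s) (s \<otimes> d)" using sd s_mono_iff[of "inv s" d] dc by simp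
  then have "lq \<one> (s \<otimes> d)" using c by simp
  then have "lq b (s \<otimes> d)" using b1 c dc trans[of b \<one> "s \<otimes> d"] by simp
  then have "lq (s \<otimes> (inv s \<otimes> b)) (s \<otimes> d)" using c by (simp add: m_assoc[symmetric])
  then have "lq (inv s \<otimes> b) d" using s_mono_iff[of "inv s \<otimes> b" d] c dc by simp
  moreover have "lq (a \<otimes> b) d" unfolding d_def using c by (intro jn_ub1) auto
  ultimately have "lq (jn a (inv s) \<otimes> b) d" using e c dc by (simp add: jn_least)
  then have 2: "lq d' d" unfolding d'_def using c dc sd by (intro jn_least) auto
  show ?thesis using antisym[OF _ _ 1 2] dc d_def d'_def by simp
qed

lemma rn_first: "RN gs \<Longrightarrow> gs \<noteq> [] \<Longrightarrow> jn (lprod G (rev gs)) (inv s) = hd gs"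
proof (induction gs)
  case Nil then show ?case by simp
next
  case (Cons g1 rest)
  have sg: "\<forall>x\<in>set (g1 # rest). simple x" using Cons.prems unfolding RN_def by blast
  have c1: "g1 \<in> carrier G" using sg unfolding simple_def by auto
  have cr: "set (rev rest) \<subseteq> carrier G" using sg simple_carr by auto
  have e: "lprod G (rev (g1 # rest)) = lprod G (rev rest) \<otimes> g1"
    using lprod_append[of "rev rest" "[g1]"] cr c1 by simp
  show ?case
  proof (cases rest)
    case Nil
    then show ?thesis using c1 sg jn_comm[of g1 "inv s"] jn_le[of "inv s" g1] unfolding simple_def by simp
  next
    case (Cons g2 rest')
    have IH: "jn (lprod G (rev rest)) (inv s) = g2" using Cons.IH RN_tl Cons.prems \<open>rest = g2 # rest'\<close> by auto
    have rr: "rc g1 g2" using Cons.prems \<open>rest = g2 # rest'\<close> unfolding RN_def by force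
    have ac: "lprod G (rev rest) \<in> carrier G" using cr lprod_closed by blast
    have "jn (lprod G (rev rest) \<otimes> g1) (inv s) = jn (g2 \<otimes> g1) (inv s)"
      using rjoinA[OF ac c1] sg IH unfolding simple_def by simp
    also have "\<dots> = g1" using rloc sg rr \<open>rest = g2 # rest'\<close> by simp
    finally show ?thesis using e by simp
  qed
qed

end

context ctx begin

lemma rn_pow: "RN gs \<Longrightarrow> i \<le> length gs \<Longrightarrow>
   s [^] i \<otimes> lprod G (rev (take i gs)) = jn (s [^] i \<otimes> lprod G (rev gs)) \<one>"
proof (induction i arbitrary: gs)
  case 0
  have sg: "\<forall>x\<in>set (rev gs). simple x" using 0 unfolding RN_def by simp
  have gc: "lprod G (rev gs) \<in> carrier G" using lprod_closed[OF simple_carr[OF sg]] .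
  have "lq (lprod G (rev gs)) \<one>" using lprod_neg[OF sg] .
  then show ?case using gc jn_le[of "lprod G (rev gs)" \<one>] by simp
next
  case (Suc i)
  then obtain g1 rest where gs: "gs = g1 # rest" by (cases gs) auto
  have RNr: "RN rest" using Suc.prems gs RN_tl by simp
  have ilen: "i \<le> length rest" using Suc.prems gs by simp
  have IH: "s [^] i \<otimes> lprod G (rev (take i rest)) = jn (s [^] i \<otimes> lprod G (rev rest)) \<one>"
    using Suc.IH RNr ilen by blast
  have sg: "\<forall>x\<in>set gs. simple x" using Suc.prems unfolding RN_def by simp
  have c1: "g1 \<in> carrier G" using sg gs unfolding simple_def by simp
  have sr: "\<forall>x\<in>set rest. simple x" using sg gs by simp
  have ac: "lprod G (rev rest) \<in> carrier G" using lprod_closed simple_carr[OF sr] by simp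
  have pc: "lprod G (rev (take i rest)) \<in> carrier G"
    using lprod_closed simple_carr[OF sr] set_take_subset[of i rest] by (metis set_rev subset_trans)
  define a where "a = lprod G (rev rest)"
  define P where "P = lprod G (rev (take i rest))"
  have ac': "a \<in> carrier G" "P \<in> carrier G" using ac pc a_def P_def by auto
  have sic: "s [^] i \<in> carrier G" by simp
  have e1: "lprod G (rev (take (Suc i) gs)) = P \<otimes> g1"
    using gs lprod_append[of "rev (take i rest)" "[g1]"] simple_carr[OF sr] set_take_subset[of i rest] c1 P_def
    by auto
  have e2: "lprod G (rev gs) = a \<otimes> g1"
    using gs lprod_append[of "rev rest" "[g1]"] simple_carr[OF sr] c1 a_def by auto
  have hd1: "jn (a \<otimes> g1) (inv s) = g1" using rn_first[OF Suc.prems(1)] gs e2 by simp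
  define g where "g = a \<otimes> g1"
  have gc: "g \<in> carrier G" using g_def ac' c1 by simp
  have sg1: "s \<otimes> g1 = jn (s \<otimes> g) \<one>"
    using hd1 s_jn[of g "inv s"] gc g_def by simp
  have "s [^] Suc i \<otimes> (P \<otimes> g1) = s \<otimes> (s [^] i \<otimes> P) \<otimes> g1"
    using ac' c1 unfolding nat_pow_Suc2[OF s_carr] by (simp add: m_assoc)
  also have "\<dots> = s \<otimes> jn (s [^] i \<otimes> a) \<one> \<otimes> g1" using IH a_def P_def by simp
  also have "\<dots> = jn (s \<otimes> (s [^] i \<otimes> a)) s \<otimes> g1" using s_jn[of "s [^] i \<otimes> a" \<one>] ac' by simp
  also have "\<dots> = jn (s \<otimes> (s [^] i \<otimes> a) \<otimes> g1) (s \<otimes> g1)" using jn_rmult ac' c1 by simp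
  also have "s \<otimes> (s [^] i \<otimes> a) \<otimes> g1 = s [^] Suc i \<otimes> g"
    using ac' c1 g_def unfolding nat_pow_Suc2[OF s_carr] by (simp add: m_assoc)
  also have "jn (s [^] Suc i \<otimes> g) (s \<otimes> g1) = jn (s [^] Suc i \<otimes> g) (jn (s \<otimes> g) \<one>)" using sg1 by simp
  also have "\<dots> = jn (s [^] Suc i \<otimes> g) \<one>"
  proof (rule jn_absorb)
    have "lq (\<one> \<otimes> g) (s [^] i \<otimes> g)" using pow_ge[of i] gc by (intro rmono) auto
    then have "lq g (s [^] i \<otimes> g)" using gc by simp
    then have "lq (s \<otimes> g) (s \<otimes> (s [^] i \<otimes> g))" using s_mono_iff[of g "s [^] i \<otimes> g"] gc by simp
    then show "lq (s \<otimes> g) (s [^] Suc i \<otimes> g)" using gc unfolding nat_pow_Suc2[OF s_carr] by (simp add: m_assoc)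
  qed (use gc in auto)
  finally show ?case using e1 e2 g_def by simp
qed

lemma lloc: assumes h1: "simple h1" and h2: "simple h2" and l: "lc h1 h2"
  shows "mt \<one> (s \<otimes> (h1 \<otimes> h2)) = h2"
proof -
  have c: "h1 \<in> carrier G" "h2 \<in> carrier G" using h1 h2 unfolding simple_def by auto
  define m where "m = mt \<one> (s \<otimes> (h1 \<otimes> h2))"
  have mc: "m \<in> carrier G" using m_def c by simp
  have m1: "lq m \<one>" unfolding m_def using c by (intro mt_lb1) auto
  have m2: "lq m (s \<otimes> (h1 \<otimes> h2))" unfolding m_def using c by (intro mt_lb2) auto
  have "lq (s \<otimes> inv s) (s \<otimes> h1)" using s_mono_iff[of "inv s" h1] h1 c unfolding simple_def by simp
  then have sh1: "lq \<one> (s \<otimes> h1)" by simp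
  then have "lq (\<one> \<otimes> h2) (s \<otimes> h1 \<otimes> h2)" using c by (intro rmono) auto
  then have "lq h2 (s \<otimes> (h1 \<otimes> h2))" using c by (simp add: m_assoc)
  then have h2m: "lq h2 m" unfolding m_def using c h2 unfolding simple_def by (intro mt_greatest) auto
  define h where "h = h2 \<otimes> inv m"
  have hc: "h \<in> carrier G" using h_def mc c by simp
  have "lq (h2 \<otimes> inv m) (m \<otimes> inv m)" using h2m mc c by (intro rmono) auto
  then have hn: "h \<in> neg_cone G lq" unfolding neg_cone_def h_def using mc c by simp
  have mn: "m \<in> neg_cone G lq" unfolding neg_cone_def using mc m1 by simp
  have hm: "h \<otimes> m = h2" unfolding h_def using mc c by (simp add: m_assoc)
  have h1h: "h1 \<otimes> h = h1 \<otimes> h2 \<otimes> inv m" unfolding h_def using mc c by (simp add: m_assoc)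
  have "h1 \<otimes> h \<in> ointerval G lq (inv s) \<one>" unfolding ointerval_def
  proof (intro CollectI conjI)
    show "h1 \<otimes> h \<in> carrier G" using c hc by simp
    have "lq (s \<otimes> (inv s \<otimes> m)) (s \<otimes> (h1 \<otimes> h2))" using m2 mc by (simp add: m_assoc[symmetric])
    then have "lq (inv s \<otimes> m) (h1 \<otimes> h2)" using s_mono_iff[of "inv s \<otimes> m" "h1 \<otimes> h2"] mc c by simp
    then have "lq (inv s \<otimes> m \<otimes> inv m) (h1 \<otimes> h2 \<otimes> inv m)" using mc c by (intro rmono) auto
    then show "lq (inv s) (h1 \<otimes> h)" using h1h mc by (simp add: m_assoc)
    have "lq (h1 \<otimes> h2) (\<one> \<otimes> h2)" using c h1 unfolding simple_def by (intro rmono) auto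
    then have a1: "lq (h1 \<otimes> h2) \<one>" using c h2 trans[of "h1 \<otimes> h2" h2 \<one>] unfolding simple_def by simp
    have "lq h1 (s \<otimes> h1)" using sh1 h1 c trans[of h1 \<one> "s \<otimes> h1"] unfolding simple_def by simp
    then have "lq (h1 \<otimes> h2) (s \<otimes> h1 \<otimes> h2)" using c by (intro rmono) auto
    then have "lq (h1 \<otimes> h2) (s \<otimes> (h1 \<otimes> h2))" using c by (simp add: m_assoc)
    then have "lq (h1 \<otimes> h2) m" unfolding m_def using a1 c by (intro mt_greatest) auto
    then have "lq (h1 \<otimes> h2 \<otimes> inv m) (m \<otimes> inv m)" using mc c by (intro rmono) auto
    then show "lq (h1 \<otimes> h) \<one>" using h1h mc by simp
  qed
  then have "h = \<one>" using l hn mn hm unfolding lc_def by blast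
  then show ?thesis using hm mc m_def by simp
qed

lemma lmeetA: assumes c: "a \<in> carrier G" "b \<in> carrier G" "c \<in> carrier G" and a1: "lq a \<one>"
  and bc: "mt \<one> (s \<otimes> (b \<otimes> c)) = c"
  shows "mt \<one> (s \<otimes> ((a \<otimes> b) \<otimes> c)) = mt \<one> (s \<otimes> (a \<otimes> b)) \<otimes> c"
proof -
  have "mt \<one> (s \<otimes> (a \<otimes> b)) \<otimes> c = mt (\<one> \<otimes> c) (s \<otimes> (a \<otimes> b) \<otimes> c)"
    using mt_rmult[of \<one> "s \<otimes> (a \<otimes> b)" c] c by simp
  also have "\<dots> = mt c (s \<otimes> ((a \<otimes> b) \<otimes> c))" using c by (simp add: m_assoc)
  also have "\<dots> = mt (mt \<one> (s \<otimes> (b \<otimes> c))) (s \<otimes> ((a \<otimes> b) \<otimes> c))" using bc by simp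
  also have "\<dots> = mt \<one> (s \<otimes> ((a \<otimes> b) \<otimes> c))"
  proof (rule mt_absorb)
    have "lq (a \<otimes> (b \<otimes> c)) (\<one> \<otimes> (b \<otimes> c))" using c a1 by (intro rmono) auto
    then have "lq (s \<otimes> (a \<otimes> (b \<otimes> c))) (s \<otimes> (b \<otimes> c))" using s_mono_iff c by simp
    then show "lq (s \<otimes> ((a \<otimes> b) \<otimes> c)) (s \<otimes> (b \<otimes> c))" using c by (simp add: m_assoc)
  qed (use c in auto)
  finally show ?thesis by simp
qed

lemma ln_first: "LN hs \<Longrightarrow> mt \<one> (s \<otimes> lprod G hs) = lprod G (tl hs)"
proof (induction hs)
  case Nil then show ?case using mt_le[of \<one> s] one_le_s by simp
next
  case (Cons h1 rest)
  have sg: "\<forall>x\<in>set (h1 # rest). simple x" using Cons.prems unfolding LN_def by blast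
  have c1: "h1 \<in> carrier G" using sg unfolding simple_def by auto
  have cr: "set rest \<subseteq> carrier G" using sg simple_carr by auto
  show ?case
  proof (cases rest)
    case Nil
    have "lq (s \<otimes> inv s) (s \<otimes> h1)" using s_mono_iff[of "inv s" h1] sg c1 unfolding simple_def by simp
    then show ?thesis using Nil c1 mt_le[of \<one> "s \<otimes> h1"] by simp
  next
    case (Cons h2 rest')
    have LNr: "LN rest" using LN_drop[OF Cons.prems, of 1] by simp
    have IH: "mt \<one> (s \<otimes> lprod G rest) = lprod G rest'" using Cons.IH LNr \<open>rest = h2 # rest'\<close> by simp
    have ll: "lc h1 h2" using Cons.prems \<open>rest = h2 # rest'\<close> unfolding LN_def by force
    have c2: "h2 \<in> carrier G" "lprod G rest' \<in> carrier G" using cr lprod_closed \<open>rest = h2 # rest'\<close> by auto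
    have "mt \<one> (s \<otimes> ((h1 \<otimes> h2) \<otimes> lprod G rest')) = mt \<one> (s \<otimes> (h1 \<otimes> h2)) \<otimes> lprod G rest'"
      using lmeetA[OF c1 c2] sg IH \<open>rest = h2 # rest'\<close> unfolding simple_def by simp
    also have "mt \<one> (s \<otimes> (h1 \<otimes> h2)) = h2" using lloc sg ll \<open>rest = h2 # rest'\<close> by simp
    finally show ?thesis using \<open>rest = h2 # rest'\<close> c1 c2 by (simp add: m_assoc)
  qed
qed

lemma ln_pow: "LN hs \<Longrightarrow> mt \<one> (s [^] (i::nat) \<otimes> lprod G hs) = lprod G (drop i hs)"
proof (induction i)
  case 0
  have sg: "\<forall>x\<in>set hs. simple x" using 0 unfolding LN_def by simp
  have gc: "lprod G hs \<in> carrier G" using lprod_closed[OF simple_carr[OF sg]] .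
  have "lq (lprod G hs) \<one>" using lprod_neg[OF sg] .
  then show ?case using gc mt_le[of "lprod G hs" \<one>] mt_comm[of \<one> "lprod G hs"] by simp
next
  case (Suc i)
  have sg: "\<forall>x\<in>set hs. simple x" using Suc.prems unfolding LN_def by simp
  have gc: "lprod G hs \<in> carrier G" using lprod_closed[OF simple_carr[OF sg]] .
  define g where "g = lprod G hs"
  have "mt \<one> (s [^] Suc i \<otimes> g) = mt \<one> (mt s (s [^] Suc i \<otimes> g))"
  proof -
    have Xc: "s [^] Suc i \<otimes> g \<in> carrier G" using gc g_def by simp
    have "mt \<one> (mt s (s [^] Suc i \<otimes> g)) = mt (mt (s [^] Suc i \<otimes> g) s) \<one>"
      using mt_comm[of \<one> "mt s (s [^] Suc i \<otimes> g)"] mt_comm[of s "s [^] Suc i \<otimes> g"] Xc by simp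
    also have "\<dots> = mt (s [^] Suc i \<otimes> g) \<one>" using mt_absorb[of \<one> s "s [^] Suc i \<otimes> g"] one_le_s Xc by simp
    finally show ?thesis using mt_comm[of \<one> "s [^] Suc i \<otimes> g"] Xc by simp
  qed
  also have "\<dots> = mt \<one> (s \<otimes> mt \<one> (s [^] i \<otimes> g))"
    using s_mt[of \<one> "s [^] i \<otimes> g"] gc g_def unfolding nat_pow_Suc2[OF s_carr] by (simp add: m_assoc)
  also have "\<dots> = mt \<one> (s \<otimes> lprod G (drop i hs))" using Suc.IH Suc.prems g_def by simp
  also have "\<dots> = lprod G (drop (Suc i) hs)" using ln_first[OF LN_drop[OF Suc.prems]] by (simp add: drop_Suc tl_drop)
  finally show ?case using g_def by simp
qed

end


theorem mainTheorem6:
  fixes G :: "('a, 'b) monoid_scheme" and leq :: "'a \<Rightarrow> 'a \<Rightarrow> bool"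
    and s g :: 'a and deg :: "'a \<Rightarrow> int" and gs hs :: "'a list"
  assumes "right_l_group G leq"
    and "modular_lattice (carrier G) leq"
    and "noetherian (carrier G) leq"
    and "strong_order_unit G leq s"
    and "degree_hom G leq deg"
    and "g \<in> neg_cone G leq"
    and "right_normal_fact G leq s g gs"
    and "left_normal_fact G leq s g hs"
    and "length hs = length gs"
  shows "\<forall>i < length gs. deg (hs ! i) = deg (gs ! i)"
proof -
  have grp: "group G" using assms(1) unfolding right_l_group_def by blast
  interpret C: ctx G leq s deg
    by (rule ctx.intro[OF grp]) (unfold_locales, use assms in auto)
  have RN: "C.RN gs" using assms(7) unfolding right_normal_fact_def C.RN_def C.rc_def C.simple_def ointerval_def
    by blast
  have LN: "C.LN hs" using assms(8) unfolding left_normal_fact_def C.LN_def C.lc_def C.simple_def ointerval_def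
    by blast
  have g1: "g = lprod G (rev gs)" using assms(7) unfolding right_normal_fact_def by blast
  have g2: "g = lprod G hs" using assms(8) unfolding left_normal_fact_def by blast
  have sgs: "\<forall>x\<in>set gs. C.simple x" using RN unfolding C.RN_def by blast
  have shs: "\<forall>x\<in>set hs. C.simple x" using LN unfolding C.LN_def by blast
  have cgs: "set gs \<subseteq> carrier G" using C.simple_carr[OF sgs] .
  have chs: "set hs \<subseteq> carrier G" using C.simple_carr[OF shs] .
  have gc: "g \<in> carrier G" using g2 C.lprod_closed[OF chs] by simp
  define Dg where "Dg i = deg (lprod G (rev (take i gs)))" for i
  define Dh where "Dh i = deg (lprod G (take i hs))" for i
  have key: "Dg i = Dh i" if il: "i \<le> length gs" for i
  proof -
    define X where "X = s [^]\<^bsub>G\<^esub> i \<otimes>\<^bsub>G\<^esub> g"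
    have Xc: "X \<in> carrier G" using X_def gc by simp
    have cti: "set (take i hs) \<subseteq> carrier G" "set (drop i hs) \<subseteq> carrier G"
      using chs set_take_subset[of i hs] set_drop_subset[of i hs] by auto
    have ctg: "set (rev (take i gs)) \<subseteq> carrier G" using cgs set_take_subset[of i gs] by auto
    have a: "s [^]\<^bsub>G\<^esub> i \<otimes>\<^bsub>G\<^esub> lprod G (rev (take i gs)) = C.jn X \<one>\<^bsub>G\<^esub>"
      using C.rn_pow[OF RN il] g1 X_def by simp
    have sic: "s [^]\<^bsub>G\<^esub> i \<in> carrier G" by simp
    have a': "deg (s [^]\<^bsub>G\<^esub> i) + Dg i = deg (C.jn X \<one>\<^bsub>G\<^esub>)"
      unfolding Dg_def using C.deg_mult[OF sic C.lprod_closed[OF ctg]] a[symmetric] by simp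
    have b: "C.mt \<one>\<^bsub>G\<^esub> X = lprod G (drop i hs)" using C.ln_pow[OF LN] g2 X_def by simp
    have "g = lprod G (take i hs) \<otimes>\<^bsub>G\<^esub> lprod G (drop i hs)"
      using g2 C.lprod_append[OF cti] by simp
    then have b': "deg g = Dh i + deg (C.mt \<one>\<^bsub>G\<^esub> X)"
      unfolding Dh_def using b C.deg_mult C.lprod_closed cti by simp
    have r: "deg (C.jn X \<one>\<^bsub>G\<^esub>) + deg (C.mt X \<one>\<^bsub>G\<^esub>) = deg X + deg \<one>\<^bsub>G\<^esub>"
      using C.rank[OF Xc] by simp
    have "C.mt X \<one>\<^bsub>G\<^esub> = C.mt \<one>\<^bsub>G\<^esub> X" using C.mt_comm Xc by simp
    moreover have "deg X = deg (s [^]\<^bsub>G\<^esub> i) + deg g" using X_def C.deg_mult gc by simp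
    ultimately show ?thesis using a' b' r by simp
  qed
  show ?thesis
  proof (intro allI impI)
    fix i assume i: "i < length gs"
    have ih: "i < length hs" using i assms(9) by simp
    have hc: "hs ! i \<in> carrier G" using chs ih by (meson nth_mem subsetD)
    have gic: "gs ! i \<in> carrier G" using cgs i by (meson nth_mem subsetD)
    have cti: "set (take i hs) \<subseteq> carrier G" using chs set_take_subset[of i hs] by auto
    have ctg: "set (rev (take i gs)) \<subseteq> carrier G" using cgs set_take_subset[of i gs] by auto
    have "lprod G (take (Suc i) hs) = lprod G (take i hs) \<otimes>\<^bsub>G\<^esub> hs ! i"
      using take_Suc_conv_app_nth[OF ih] C.lprod_append[OF cti, of "[hs ! i]"] hc by simp
    then have h: "Dh (Suc i) = Dh i + deg (hs ! i)"
      unfolding Dh_def using C.deg_mult C.lprod_closed[OF cti] hc by simp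
    have "lprod G (rev (take (Suc i) gs)) = gs ! i \<otimes>\<^bsub>G\<^esub> lprod G (rev (take i gs))"
      using take_Suc_conv_app_nth[OF i] by simp
    then have gg: "Dg (Suc i) = deg (gs ! i) + Dg i"
      unfolding Dg_def using C.deg_mult C.lprod_closed[OF ctg] gic by simp
    show "deg (hs ! i) = deg (gs ! i)" using h gg key[of i] key[of "Suc i"] i by simp
  qed
qed

end
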